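(* Let $d\ge1$, $p>1$, $s\in(0,1)$, and $\alpha_1,\alpha_2\in\mathbb{R}$ with $\alpha=\alpha_1+\alpha_2$, $\alpha_1p,\alpha_2p\in(-d,sp)$, $0\le\alpha p<sp$ and $sp-\alpha p<d$. Let $\mathcal{C}_\alpha>0$ be the weighted fractional Sobolev constant described in the context. Then for every $u\in W^{s,p,\alpha}(\mathbb{R}^d)$ with $\int_{\mathbb{R}^d}|u(x)|^pdx=1$, \[ \int_{\mathbb{R}^d}|u(x)|^p\log|u(x)|\,dx\le\frac{d}{(s-\alpha)p^2}\log\left(\mathcal{C}_\alpha\int_{\mathbb{R}^d}\int_{\mathbb{R}^d}\frac{|u(x)-u(y)|^p}{|x-y|^{d+sp}}|x|^{\alpha_1p}|y|^{\alpha_2p}\,dx\,dy\right). \]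
   Context: The weighted Gagliardo seminorm is $[u]_{W^{s,p,\alpha}(\mathbb{R}^d)}^p=\int_{\mathbb{R}^d}\int_{\mathbb{R}^d}\frac{|u(x)-u(y)|^p}{|x-y|^{d+sp}}|x|^{\alpha_1p}|y|^{\alpha_2p}dx\,dy$, and $W^{s,p,\alpha}(\mathbb{R}^d)$ is the closure of $C^1_c(\mathbb{R}^d)$ with respect to the norm $(\|u\|_{L^p(\mathbb{R}^d)}^p+[u]_{W^{s,p,\alpha}(\mathbb{R}^d)}^p)^{1/p}$. $\mathcal{C}_\alpha=\mathcal{C}_\alpha(d,p,s,\alpha_1,\alpha_2)>0$ is a constant such that, with $p^*_{s,\alpha}=\frac{dp}{d-sp+\alpha p}$, the weighted fractional Sobolev inequality $\|u\|_{L^{p^*_{s,\alpha}}(\mathbb{R}^d)}\le\mathcal{C}_\alpha^{1/p}[u]_{W^{s,p,\alpha}(\mathbb{R}^d)}$ holds for all $u\in W^{s,p,\alpha}(\mathbb{R}^d)$ (such a constant exists under the stated hypotheses by a fractional Caffarelli–Kohn–Nirenberg inequality of Nguyen and Squassina). *)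

theory Defs
  imports "HOL-Analysis.Analysis"
begin

text \<open>Functions on R^d are modelled as maps from a Euclidean space 'a with d = DIM('a);
  the measure is Lebesgue (Borel) measure lborel.\<close>

definition C1c :: "('a::euclidean_space \<Rightarrow> real) set" where
  "C1c = {\<phi>. (\<exists>D :: 'a \<Rightarrow> ('a \<Rightarrow>\<^sub>L real).
               (\<forall>x. (\<phi> has_derivative blinfun_apply (D x)) (at x)) \<and> continuous_on UNIV D)
            \<and> compact (closure {x. \<phi> x \<noteq> 0})}"

definition Lp_pow :: "real \<Rightarrow> ('a::euclidean_space \<Rightarrow> real) \<Rightarrow> ennreal" where
  "Lp_pow q u = (\<integral>\<^sup>+ x. ennreal (\<bar>u x\<bar> powr q) \<partial>lborel)"

definition gagliardo_pow ::
  "real \<Rightarrow> real \<Rightarrow> real \<Rightarrow> real \<Rightarrow> ('a::euclidean_space \<Rightarrow> real) \<Rightarrow> ennreal" where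
  "gagliardo_pow s p \<alpha>1 \<alpha>2 u =
     (\<integral>\<^sup>+ x. \<integral>\<^sup>+ y. ennreal (\<bar>u x - u y\<bar> powr p / norm (x - y) powr (real DIM('a) + s * p)
                          * norm x powr (\<alpha>1 * p) * norm y powr (\<alpha>2 * p)) \<partial>lborel \<partial>lborel)"

definition Wspa :: "real \<Rightarrow> real \<Rightarrow> real \<Rightarrow> real \<Rightarrow> ('a::euclidean_space \<Rightarrow> real) set" where
  "Wspa s p \<alpha>1 \<alpha>2 = {u. u \<in> borel_measurable lborel \<and>
       Lp_pow p u < \<infinity> \<and> gagliardo_pow s p \<alpha>1 \<alpha>2 u < \<infinity> \<and>
       (\<exists>\<phi> :: nat \<Rightarrow> 'a \<Rightarrow> real. (\<forall>k. \<phi> k \<in> C1c) \<and>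
          ((\<lambda>k. Lp_pow p (\<lambda>x. \<phi> k x - u x) + gagliardo_pow s p \<alpha>1 \<alpha>2 (\<lambda>x. \<phi> k x - u x))
              \<longlonglongrightarrow> 0))}"

definition entropy_int :: "real \<Rightarrow> ('a::euclidean_space \<Rightarrow> real) \<Rightarrow> ereal" where
  "entropy_int p u =
     enn2ereal (\<integral>\<^sup>+ x. ennreal (max 0 (\<bar>u x\<bar> powr p * ln \<bar>u x\<bar>)) \<partial>lborel)
   - enn2ereal (\<integral>\<^sup>+ x. ennreal (max 0 (- (\<bar>u x\<bar> powr p * ln \<bar>u x\<bar>))) \<partial>lborel)"

end

theory Submission
  imports Defs
begin

lemma pointwise:
  fixes t r A :: real
  assumes t: "t \<ge> 0" and r: "r > 0" and A: "A > 0" and p: "p > 0"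
  shows "r * (t powr p * ln t) + t powr p \<le> t powr (p + r) / A + ln A * t powr p"
proof (cases "t = 0")
  case True then show ?thesis using A by simp
next
  case False
  then have tp: "t > 0" using t by simp
  have "ln (t powr r / A) \<le> t powr r / A - 1"
    by (rule ln_le_minus_one) (use tp A in simp)
  then have "r * ln t - ln A \<le> t powr r / A - 1"
    using tp A by (simp add: ln_div ln_powr)
  then have "t powr p * (r * ln t - ln A) \<le> t powr p * (t powr r / A - 1)"
    by (rule mult_left_mono) simp
  then show ?thesis using tp by (simp add: powr_add algebra_simps)
qed

lemma ennreal_plus3:
  fixes a b c :: real
  assumes "a \<ge> 0" "b \<ge> 0" "c \<ge> 0"
  shows "ennreal (a + b + c) = ennreal a + ennreal b + ennreal c"
  using assms by (simp add: ennreal_plus)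

lemma nn_integral_add3:
  assumes "a \<in> borel_measurable M" "b \<in> borel_measurable M" "c \<in> borel_measurable M"
  shows "(\<integral>\<^sup>+ x. a x + b x + c x \<partial>M) = (\<integral>\<^sup>+ x. a x \<partial>M) + (\<integral>\<^sup>+ x. b x \<partial>M) + (\<integral>\<^sup>+ x. c x \<partial>M)"
proof -
  have "(\<integral>\<^sup>+ x. a x + b x + c x \<partial>M) = (\<integral>\<^sup>+ x. a x + b x \<partial>M) + (\<integral>\<^sup>+ x. c x \<partial>M)"
    using assms by (intro nn_integral_add) auto
  also have "(\<integral>\<^sup>+ x. a x + b x \<partial>M) = (\<integral>\<^sup>+ x. a x \<partial>M) + (\<integral>\<^sup>+ x. b x \<partial>M)"
    using assms by (intro nn_integral_add) auto
  finally show ?thesis .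
qed

lemma entropy_bound:
  fixes u :: "'a::euclidean_space \<Rightarrow> real"
  assumes um: "u \<in> borel_measurable lborel" and p: "p > 0" and q: "q > p"
    and hP: "Lp_pow p u = 1" and hQ: "Lp_pow q u = ennreal A" and A: "A > 0"
  shows "entropy_int p u \<le> ereal (ln A / (q - p))"
proof -
  define r where "r = q - p"
  have r: "r > 0" using q by (simp add: r_def)
  define f where "f x = \<bar>u x\<bar> powr p * ln \<bar>u x\<bar>" for x
  define Lp where "Lp = max 0 (ln A)"
  define Lm where "Lm = max 0 (- ln A)"
  define Ep where "Ep = (\<integral>\<^sup>+ x. ennreal (max 0 (f x)) \<partial>lborel)"
  define Em where "Em = (\<integral>\<^sup>+ x. ennreal (max 0 (- f x)) \<partial>lborel)"
  have ent: "entropy_int p u = enn2ereal Ep - enn2ereal Em"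
    unfolding entropy_int_def Ep_def Em_def f_def by simp
  note um[measurable]
  have fm[measurable]: "f \<in> borel_measurable lborel" unfolding f_def by measurable
  have pm: "(\<lambda>x. \<bar>u x\<bar> powr p) \<in> borel_measurable lborel" by measurable
  have qm: "(\<lambda>x. \<bar>u x\<bar> powr q) \<in> borel_measurable lborel" by measurable
  have P1: "(\<integral>\<^sup>+ x. ennreal (\<bar>u x\<bar> powr p) \<partial>lborel) = 1" using hP by (simp add: Lp_pow_def)
  have Q1: "(\<integral>\<^sup>+ x. ennreal (\<bar>u x\<bar> powr q / A) \<partial>lborel) = 1"
  proof -
    have "(\<integral>\<^sup>+ x. ennreal (\<bar>u x\<bar> powr q / A) \<partial>lborel)
        = (\<integral>\<^sup>+ x. ennreal (1/A) * ennreal (\<bar>u x\<bar> powr q) \<partial>lborel)"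
      using A by (intro nn_integral_cong) (simp add: ennreal_mult[symmetric])
    also have "\<dots> = ennreal (1/A) * ennreal A"
      using hQ qm by (simp add: nn_integral_cmult Lp_pow_def)
    also have "\<dots> = 1" using A by (simp add: ennreal_mult[symmetric])
    finally show ?thesis .
  qed
  have pw: "r * f x + \<bar>u x\<bar> powr p \<le> \<bar>u x\<bar> powr q / A + ln A * \<bar>u x\<bar> powr p" for x
    using pointwise[of "\<bar>u x\<bar>" r A p] r A p unfolding f_def r_def by simp
  have cm: "(\<integral>\<^sup>+ x. ennreal (c * g x) \<partial>lborel) = ennreal c * (\<integral>\<^sup>+ x. ennreal (g x) \<partial>lborel)"
    if "c \<ge> 0" "\<And>x. g x \<ge> 0" "g \<in> borel_measurable lborel" for c and g :: "'a \<Rightarrow> real"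
  proof -
    have "(\<integral>\<^sup>+ x. ennreal (c * g x) \<partial>lborel) = (\<integral>\<^sup>+ x. ennreal c * ennreal (g x) \<partial>lborel)"
      using that by (intro nn_integral_cong) (simp add: ennreal_mult)
    also have "\<dots> = ennreal c * (\<integral>\<^sup>+ x. ennreal (g x) \<partial>lborel)"
      using that by (simp add: nn_integral_cmult)
    finally show ?thesis .
  qed
  have ineq1: "(\<integral>\<^sup>+ x. ennreal (r * max 0 (f x)) + ennreal (\<bar>u x\<bar> powr p) + ennreal (Lm * \<bar>u x\<bar> powr p) \<partial>lborel)
      \<le> (\<integral>\<^sup>+ x. ennreal (\<bar>u x\<bar> powr q / A) + ennreal (r * max 0 (- f x)) + ennreal (Lp * \<bar>u x\<bar> powr p) \<partial>lborel)"
  proof (intro nn_integral_mono)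
    fix x
    have "r * max 0 (f x) + \<bar>u x\<bar> powr p + Lm * \<bar>u x\<bar> powr p
        \<le> \<bar>u x\<bar> powr q / A + r * max 0 (- f x) + Lp * \<bar>u x\<bar> powr p"
      using pw[of x] r unfolding Lp_def Lm_def
      by (cases "f x \<ge> 0"; cases "ln A \<ge> 0") (auto simp: algebra_simps)
    then have "ennreal (r * max 0 (f x) + \<bar>u x\<bar> powr p + Lm * \<bar>u x\<bar> powr p)
        \<le> ennreal (\<bar>u x\<bar> powr q / A + r * max 0 (- f x) + Lp * \<bar>u x\<bar> powr p)"
      by (rule ennreal_leI)
    moreover have "ennreal (r * max 0 (f x) + \<bar>u x\<bar> powr p + Lm * \<bar>u x\<bar> powr p)
       = ennreal (r * max 0 (f x)) + ennreal (\<bar>u x\<bar> powr p) + ennreal (Lm * \<bar>u x\<bar> powr p)"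
      using r by (intro ennreal_plus3) (auto simp: Lm_def)
    moreover have "ennreal (\<bar>u x\<bar> powr q / A + r * max 0 (- f x) + Lp * \<bar>u x\<bar> powr p)
       = ennreal (\<bar>u x\<bar> powr q / A) + ennreal (r * max 0 (- f x)) + ennreal (Lp * \<bar>u x\<bar> powr p)"
      using r A by (intro ennreal_plus3) (auto simp: Lp_def)
    ultimately show "ennreal (r * max 0 (f x)) + ennreal (\<bar>u x\<bar> powr p) + ennreal (Lm * \<bar>u x\<bar> powr p)
      \<le> ennreal (\<bar>u x\<bar> powr q / A) + ennreal (r * max 0 (- f x)) + ennreal (Lp * \<bar>u x\<bar> powr p)"
      by simp
  qed
  have L: "(\<integral>\<^sup>+ x. ennreal (r * max 0 (f x)) + ennreal (\<bar>u x\<bar> powr p) + ennreal (Lm * \<bar>u x\<bar> powr p) \<partial>lborel)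
     = ennreal r * Ep + 1 + ennreal Lm"
  proof -
    have c1: "(\<integral>\<^sup>+ x. ennreal (r * max 0 (f x)) \<partial>lborel) = ennreal r * Ep"
      unfolding Ep_def using r fm by (intro cm) auto
    have c2: "(\<integral>\<^sup>+ x. ennreal (Lm * \<bar>u x\<bar> powr p) \<partial>lborel) = ennreal Lm"
      using cm[of Lm "\<lambda>x. \<bar>u x\<bar> powr p"] pm P1 by (auto simp: Lm_def)
    show ?thesis
      by (subst nn_integral_add3) (measurable, simp only: c1 c2 P1)
  qed
  have R: "(\<integral>\<^sup>+ x. ennreal (\<bar>u x\<bar> powr q / A) + ennreal (r * max 0 (- f x)) + ennreal (Lp * \<bar>u x\<bar> powr p) \<partial>lborel)
     = 1 + ennreal r * Em + ennreal Lp"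
  proof -
    have c1: "(\<integral>\<^sup>+ x. ennreal (r * max 0 (- f x)) \<partial>lborel) = ennreal r * Em"
      unfolding Em_def using r fm by (intro cm) auto
    have c2: "(\<integral>\<^sup>+ x. ennreal (Lp * \<bar>u x\<bar> powr p) \<partial>lborel) = ennreal Lp"
      using cm[of Lp "\<lambda>x. \<bar>u x\<bar> powr p"] pm P1 by (auto simp: Lp_def)
    show ?thesis
      by (subst nn_integral_add3) (measurable, simp only: c1 c2 Q1)
  qed
  have main: "ennreal r * Ep + 1 + ennreal Lm \<le> 1 + ennreal r * Em + ennreal Lp"
    using ineq1 L R by simp
  have ineq2: "(\<integral>\<^sup>+ x. ennreal (r * max 0 (f x)) \<partial>lborel)
      \<le> (\<integral>\<^sup>+ x. ennreal (\<bar>u x\<bar> powr q / A) + ennreal (Lp * \<bar>u x\<bar> powr p) \<partial>lborel)"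
  proof (intro nn_integral_mono)
    fix x
    have "r * max 0 (f x) \<le> \<bar>u x\<bar> powr q / A + Lp * \<bar>u x\<bar> powr p"
    proof -
      have t0: "0 \<le> \<bar>u x\<bar> powr p" by simp
      have q0: "0 \<le> \<bar>u x\<bar> powr q / A" using A by simp
      have "ln A * \<bar>u x\<bar> powr p \<le> Lp * \<bar>u x\<bar> powr p"
        unfolding Lp_def by (rule mult_right_mono) (auto simp: t0)
      moreover have l0: "0 \<le> Lp * \<bar>u x\<bar> powr p" unfolding Lp_def by simp
      ultimately show ?thesis
      proof (cases "f x \<ge> 0")
        case True
        then have e: "r * max 0 (f x) = r * f x" by simp
        show ?thesis unfolding e using pw[of x] t0 \<open>ln A * \<bar>u x\<bar> powr p \<le> Lp * \<bar>u x\<bar> powr p\<close> by linarith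
      next
        case False
        then have e: "r * max 0 (f x) = 0" by simp
        show ?thesis unfolding e using l0 q0 by linarith
      qed

    qed
    then have "ennreal (r * max 0 (f x)) \<le> ennreal (\<bar>u x\<bar> powr q / A + Lp * \<bar>u x\<bar> powr p)"
      by (rule ennreal_leI)
    also have "\<dots> = ennreal (\<bar>u x\<bar> powr q / A) + ennreal (Lp * \<bar>u x\<bar> powr p)"
      using A by (intro ennreal_plus) (auto simp: Lp_def)
    finally show "ennreal (r * max 0 (f x)) \<le> ennreal (\<bar>u x\<bar> powr q / A) + ennreal (Lp * \<bar>u x\<bar> powr p)" .
  qed
  have Epfin: "ennreal r * Ep \<le> 1 + ennreal Lp"
  proof -
    have c1: "(\<integral>\<^sup>+ x. ennreal (r * max 0 (f x)) \<partial>lborel) = ennreal r * Ep"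
      unfolding Ep_def using r fm by (intro cm) auto
    have c2: "(\<integral>\<^sup>+ x. ennreal (Lp * \<bar>u x\<bar> powr p) \<partial>lborel) = ennreal Lp"
      using cm[of Lp "\<lambda>x. \<bar>u x\<bar> powr p"] pm P1 by (auto simp: Lp_def)
    have "(\<integral>\<^sup>+ x. ennreal (\<bar>u x\<bar> powr q / A) + ennreal (Lp * \<bar>u x\<bar> powr p) \<partial>lborel) = 1 + ennreal Lp"
      by (subst nn_integral_add) (measurable, simp only: c2 Q1)
    then show ?thesis using ineq2 c1 by simp
  qed
  have "Ep < \<infinity>"
  proof (rule ccontr)
    assume "\<not> Ep < \<infinity>"
    then have "Ep = \<infinity>" using less_top[of Ep] by auto
    then have "ennreal r * Ep = \<infinity>" using r by (simp add: ennreal_mult_eq_top_iff)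
    moreover have "1 + ennreal Lp < \<infinity>" by simp
    ultimately show False using Epfin by (metis leD)
  qed
  then obtain a where a: "Ep = ennreal a" "a \<ge> 0" by (cases Ep) auto
  show ?thesis
  proof (cases "Em = \<infinity>")
    case True
    then show ?thesis using ent a by simp
  next
    case False
    then obtain b where b: "Em = ennreal b" "b \<ge> 0" by (cases Em) auto
    have "ennreal (r * a + 1 + Lm) \<le> ennreal (1 + r * b + Lp)"
    proof -
      have "ennreal (r * a + 1 + Lm) = ennreal r * Ep + 1 + ennreal Lm"
        using a r by (subst ennreal_plus3) (auto simp: Lm_def ennreal_mult)
      moreover have "ennreal (1 + r * b + Lp) = 1 + ennreal r * Em + ennreal Lp"
        using b r by (subst ennreal_plus3) (auto simp: Lp_def ennreal_mult)
      ultimately show ?thesis using main by simp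
    qed
    then have "r * a + 1 + Lm \<le> 1 + r * b + Lp"
      using a b r by (subst (asm) ennreal_le_iff) (auto simp: Lp_def)
    then have "r * (a - b) \<le> ln A" unfolding Lp_def Lm_def by (auto simp: algebra_simps)
    then have "a - b \<le> ln A / r" using r by (simp add: field_simps)
    then show ?thesis using ent a b by (simp add: r_def)
  qed
qed

theorem theorem1p3:
  fixes u :: "'a::euclidean_space \<Rightarrow> real"
    and p s \<alpha>1 \<alpha>2 \<alpha> C :: real
  defines "d \<equiv> real DIM('a)"
  assumes hp: "p > 1"
    and hs: "0 < s" "s < 1"
    and h\<alpha>: "\<alpha> = \<alpha>1 + \<alpha>2"
    and h\<alpha>1: "-d < \<alpha>1 * p" "\<alpha>1 * p < s * p"
    and h\<alpha>2: "-d < \<alpha>2 * p" "\<alpha>2 * p < s * p"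
    and h\<alpha>p: "0 \<le> \<alpha> * p" "\<alpha> * p < s * p"
    and hd: "s * p - \<alpha> * p < d"
    and hC: "C > 0"
    and hSob: "\<forall>v :: 'a \<Rightarrow> real \<in> Wspa s p \<alpha>1 \<alpha>2.
                 Lp_pow (d * p / (d - s * p + \<alpha> * p)) v < \<infinity> \<and>
                 enn2real (Lp_pow (d * p / (d - s * p + \<alpha> * p)) v)
                     powr ((d - s * p + \<alpha> * p) / (d * p))
                   \<le> C powr (1 / p) * enn2real (gagliardo_pow s p \<alpha>1 \<alpha>2 v) powr (1 / p)"
    and hu: "u \<in> Wspa s p \<alpha>1 \<alpha>2"
    and hnorm: "Lp_pow p u = 1"
  shows "entropy_int p u \<le>
           ereal (d / ((s - \<alpha>) * p^2) * ln (C * enn2real (gagliardo_pow s p \<alpha>1 \<alpha>2 u)))"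
proof -
  define D where "D = d - s * p + \<alpha> * p"
  define q where "q = d * p / D"
  have D: "D > 0" using hd by (simp add: D_def)
  have p0: "p > 0" using hp by simp
  have sa: "s - \<alpha> > 0" using h\<alpha>p(2) p0 by (simp add: mult_less_cancel_right)
  have dD: "d - D = (s - \<alpha>) * p" by (simp add: D_def algebra_simps)
  have qp: "q - p = p * ((s - \<alpha>) * p) / D"
  proof -
    have "q - p = (d * p - p * D) / D" using D unfolding q_def by (simp add: field_simps)
    also have "\<dots> = p * (d - D) / D" by (simp add: algebra_simps)
    finally show ?thesis using dD by simp
  qed
  have "p * ((s - \<alpha>) * p) / D > 0" using D p0 sa by simp
  then have qp0: "q > p" using qp by linarith
  have q0: "q > 0" using qp0 p0 by simp
  have um: "u \<in> borel_measurable lborel" using hu by (simp add: Wspa_def)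
  note um[measurable]
  from hSob hu have S1: "Lp_pow q u < \<infinity>"
    and S2: "enn2real (Lp_pow q u) powr (D / (d * p))
       \<le> C powr (1 / p) * enn2real (gagliardo_pow s p \<alpha>1 \<alpha>2 u) powr (1 / p)"
    unfolding q_def D_def by auto
  define A where "A = enn2real (Lp_pow q u)"
  define G where "G = enn2real (gagliardo_pow s p \<alpha>1 \<alpha>2 u)"
  have QA: "Lp_pow q u = ennreal A" using S1 unfolding A_def by (simp add: less_top)
  have A0: "A \<ge> 0" unfolding A_def by simp
  have G0: "G \<ge> 0" unfolding G_def by simp
  have Apos: "A > 0"
  proof (rule ccontr)
    assume "\<not> A > 0"
    then have "A = 0" using A0 by simp
    then have "(\<integral>\<^sup>+ x. ennreal (\<bar>u x\<bar> powr q) \<partial>lborel) = 0" using QA by (simp add: Lp_pow_def)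
    then have "AE x in lborel. ennreal (\<bar>u x\<bar> powr q) = 0"
      by (subst (asm) nn_integral_0_iff_AE) measurable
    then have "AE x in lborel. ennreal (\<bar>u x\<bar> powr p) = 0"
      by eventually_elim simp
    then have "(\<integral>\<^sup>+ x. ennreal (\<bar>u x\<bar> powr p) \<partial>lborel) = 0"
      by (subst nn_integral_0_iff_AE) measurable
    then show False using hnorm by (simp add: Lp_pow_def)
  qed
  have Dq: "D / (d * p) = 1 / q" unfolding q_def by simp
  have S3: "A powr (1 / q) \<le> C powr (1 / p) * G powr (1 / p)"
    using S2 unfolding A_def G_def Dq .
  have "A powr (1 / q) > 0" using Apos by simp
  then have Gpos: "G > 0" using S3 G0 by (cases "G = 0") auto
  have "ln (A powr (1 / q)) \<le> ln (C powr (1 / p) * G powr (1 / p))"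
  proof -
    have "0 < A powr (1 / q)" using Apos by simp
    moreover have "0 < C powr (1 / p) * G powr (1 / p)" using Gpos hC by simp
    ultimately show ?thesis using S3 by (simp only: ln_le_cancel_iff)
  qed
  then have "ln A / q \<le> ln C / p + ln G / p"
    using Apos Gpos hC by (simp add: ln_mult ln_powr)
  then have "ln A / q \<le> ln (C * G) / p"
    using Gpos hC by (simp add: ln_mult add_divide_distrib)
  then have L1: "ln A \<le> q / p * ln (C * G)"
    using q0 p0 by (simp add: field_simps)
  have coef: "q / p / (q - p) = d / ((s - \<alpha>) * p^2)"
    unfolding qp using D p0 sa unfolding q_def by (simp add: field_simps power2_eq_square)
  have "ln A / (q - p) \<le> q / p * ln (C * G) / (q - p)"
    using L1 qp0 by (intro divide_right_mono) auto
  also have "\<dots> = d / ((s - \<alpha>) * p^2) * ln (C * G)"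
    by (simp only: times_divide_eq_left[symmetric] coef)
  finally have fin: "ln A / (q - p) \<le> d / ((s - \<alpha>) * p^2) * ln (C * G)" .
  have "entropy_int p u \<le> ereal (ln A / (q - p))"
    by (rule entropy_bound[OF um p0 qp0 hnorm QA Apos])
  also have "\<dots> \<le> ereal (d / ((s - \<alpha>) * p^2) * ln (C * G))"
    using fin by simp
  finally show ?thesis unfolding G_def .
qed

end
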